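(* Let $n$ be a positive integer and $\alpha,\beta\in\mathbb{R}$ with $\alpha>\beta$. Then $A_n^{\alpha,\beta}$ is symmetric positive definite, and its smallest eigenvalue $\lambda_1^{n,\alpha,\beta}$ satisfies \[ \lambda_1^{n,\alpha,\beta}\ \ge\ t_n\cdot \min_{1\le i\le n}J_{\alpha-\beta}(i)\cdot \min\{1,n^{2\beta}\}\ >\ 0 . \]
   Context: For $i,j$ positive integers, $(i,j)$ denotes the greatest common divisor and $[i,j]$ the least common multiple. For $\alpha,\beta\in\mathbb{R}$ and a positive integer $n$, $A_n^{\alpha,\beta}$ is the $n\times n$ real matrix with $(i,j)$ entry $(i,j)^{\alpha}[i,j]^{\beta}$. $E_n$ is the $n\times n$ matrix with $(E_n)_{ij}=1$ if $j\mid i$ and $(E_n)_{ij}=0$ otherwise; $t_n$ denotes the smallest eigenvalue and $T_n$ the largest eigenvalue of the symmetric matrix $E_n^{T}E_n$. For real $s$, $J_s$ is the arithmetical function $J_s(k)=k^{s}\prod_{p\mid k}\left(1-p^{-s}\right)$ (product over primes $p$ dividing $k$), equivalently $J_s(k)=\sum_{d\mid k} d^{s}\mu(k/d)$ where $\mu$ is the Möbius function. *)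

theory Defs
  imports Complex_Main "HOL-Computational_Algebra.Primes" "Jordan_Normal_Form.Matrix" "Jordan_Normal_Form.Char_Poly"
begin

text \<open>Matrices are n x n JNF matrices, rows/columns indexed 0..n-1; entry (i,j) corresponds to
  the paper's entry (i+1, j+1).\<close>

definition A_mat :: "nat \<Rightarrow> real \<Rightarrow> real \<Rightarrow> real mat" where
  "A_mat n \<alpha> \<beta> = mat n n (\<lambda>(i,j). real (gcd (i+1) (j+1)) powr \<alpha> * real (lcm (i+1) (j+1)) powr \<beta>)"

definition E_mat :: "nat \<Rightarrow> real mat" where
  "E_mat n = mat n n (\<lambda>(i,j). if (j+1) dvd (i+1) then 1 else 0)"

definition symmetric_mat :: "real mat \<Rightarrow> bool" where
  "symmetric_mat A \<longleftrightarrow> dim_row A = dim_col A \<and> transpose_mat A = A"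

definition pos_def_mat :: "real mat \<Rightarrow> bool" where
  "pos_def_mat A \<longleftrightarrow> symmetric_mat A \<and>
     (\<forall>x \<in> carrier_vec (dim_row A). x \<noteq> 0\<^sub>v (dim_row A) \<longrightarrow> x \<bullet> (A *\<^sub>v x) > 0)"

text \<open>Smallest eigenvalue (meaningful for real symmetric matrices, whose eigenvalues are all real).\<close>
definition min_eigenvalue :: "real mat \<Rightarrow> real" where
  "min_eigenvalue A = Min {k. eigenvalue A k}"

definition t_min :: "nat \<Rightarrow> real" where
  "t_min n = min_eigenvalue (transpose_mat (E_mat n) * E_mat n)"

definition Jordan_tot :: "real \<Rightarrow> nat \<Rightarrow> real" where
  "Jordan_tot s k = real k powr s * (\<Prod>p\<in>prime_factors k. (1 - real p powr (-s)))"

end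

theory Submission imports Defs "HOL-Analysis.Analysis" begin

lemma compact_box:
  fixes n :: nat
  shows "compact (Pi UNIV (\<lambda>i. if i < n then {-1..1::real} else {0}))"
proof -
  have "compactin (product_topology (\<lambda>_. euclidean) UNIV) (PiE UNIV (\<lambda>i. if i < n then {-1..1::real} else {0}))"
    by (subst compactin_PiE) auto
  thus ?thesis by (simp add: euclidean_product_topology PiE_UNIV_domain)
qed

lemma bil_expand:
  fixes K :: "nat \<Rightarrow> nat \<Rightarrow> real"
  shows "(\<Sum>i<n. \<Sum>j<n. (u i + t*w i) * K i j * (u j + t*w j)) =
   (\<Sum>i<n. \<Sum>j<n. u i*K i j*u j) + t*(\<Sum>i<n. \<Sum>j<n. w i*K i j*u j)
   + t*(\<Sum>i<n. \<Sum>j<n. u i*K i j*w j) + t^2*(\<Sum>i<n. \<Sum>j<n. w i*K i j*w j)"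
  by (simp add: algebra_simps sum.distrib sum_distrib_left power2_eq_square)

lemma psd_kernel:
  fixes K :: "nat \<Rightarrow> nat \<Rightarrow> real"
  assumes sym: "\<And>i j. i<n \<Longrightarrow> j<n \<Longrightarrow> K i j = K j i"
    and psd: "\<And>x. (\<Sum>i<n. \<Sum>j<n. x i * K i j * x j) \<ge> 0"
    and u0: "(\<Sum>i<n. \<Sum>j<n. u i * K i j * u j) = 0"
  shows "\<And>i. i < n \<Longrightarrow> (\<Sum>j<n. K i j * u j) = 0"
proof -
  define w where "w i = (\<Sum>j<n. K i j * u j)" for i
  define a where "a = (\<Sum>i<n. w i ^ 2)"
  define b where "b = (\<Sum>i<n. \<Sum>j<n. w i*K i j*w j)"
  have wu: "(\<Sum>i<n. \<Sum>j<n. w i*K i j*u j) = a"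
    unfolding a_def w_def by (simp add: power2_eq_square sum_distrib_left mult.assoc)
  have "(\<Sum>i<n. \<Sum>j<n. u i*K i j*w j) = (\<Sum>j<n. \<Sum>i<n. u i*K i j*w j)"
    by (rule sum.swap)
  also have "\<dots> = (\<Sum>j<n. \<Sum>i<n. w j*K j i*u i)"
    by (intro sum.cong refl) (simp add: sym mult.commute mult.left_commute)
  finally have uw: "(\<Sum>i<n. \<Sum>j<n. u i*K i j*w j) = a" using wu by simp
  have b0: "b \<ge> 0" unfolding b_def by (rule psd)
  have a0: "a \<ge> 0" unfolding a_def by (intro sum_nonneg) auto
  have key: "0 \<le> 2*t*a + t^2*b" for t
    using psd[of "\<lambda>i. u i + t * w i"] unfolding bil_expand u0 wu uw b_def by (simp add: algebra_simps)
  have "a = 0"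
  proof (rule ccontr)
    assume "a \<noteq> 0" hence ap: "a > 0" using a0 by simp
    define t where "t = - a / (b+1)"
    have bp: "b+1 > 0" using b0 by simp
    have e: "(b+1)^2 * (2*t*a + t^2*b) = - (a^2*(b+2))"
    proof -
      have t1: "t*(b+1) = -a" unfolding t_def using bp by simp
      have "(b+1)^2 * (2*t*a + t^2*b) = 2*a*(b+1)*(t*(b+1)) + b*(t*(b+1))^2"
        by (simp add: algebra_simps power2_eq_square)
      also have "\<dots> = - (a^2*(b+2))" unfolding t1 by (simp add: algebra_simps power2_eq_square)
      finally show ?thesis .
    qed
    have "(b+1)^2 * (2*t*a + t^2*b) < 0" unfolding e using ap b0 by simp
    moreover have "(b+1)^2 * (2*t*a + t^2*b) \<ge> 0" using key[of t] bp by simp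
    ultimately show False by simp
  qed
  hence "\<forall>i\<in>{..<n}. w i ^ 2 = 0" unfolding a_def by (subst sum_nonneg_eq_0_iff[symmetric]) auto
  thus "\<And>i. i < n \<Longrightarrow> (\<Sum>j<n. K i j * u j) = 0" unfolding w_def by auto
qed

lemma rayleigh_fun:
  fixes M :: "nat \<Rightarrow> nat \<Rightarrow> real"
  assumes sym: "\<And>i j. i<n \<Longrightarrow> j<n \<Longrightarrow> M i j = M j i" and n1: "n \<ge> 1"
  shows "\<exists>\<mu> u. (\<Sum>i<n. u i^2) = 1 \<and> (\<forall>i<n. (\<Sum>j<n. M i j * u j) = \<mu> * u i) \<and>
     (\<forall>x. (\<Sum>i<n. \<Sum>j<n. x i * M i j * x j) \<ge> \<mu> * (\<Sum>i<n. x i^2))"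
proof -
  define q where "q x = (\<Sum>i<n. \<Sum>j<n. x i * M i j * x j)" for x :: "nat \<Rightarrow> real"
  define N where "N x = (\<Sum>i<n. x i^2)" for x :: "nat \<Rightarrow> real"
  define S where "S = Pi UNIV (\<lambda>i. if i < n then {-1..1::real} else {0}) \<inter> {x. N x = 1}"
  have cN: "continuous_on UNIV N" unfolding N_def
    by (intro continuous_intros continuous_on_product_then_coordinatewise continuous_on_id)
  have cq: "continuous_on S q" unfolding q_def
    by (intro continuous_intros continuous_on_product_then_coordinatewise continuous_on_id)
  have "closed {x. N x = 1}"
    using cN by (intro closed_Collect_eq) (auto intro: continuous_on_const)
  hence cS: "compact S" unfolding S_def using compact_box by blast
  define e where "e = (\<lambda>i::nat. if i = 0 then 1 else (0::real))"
  have "(\<Sum>i<n. e i^2) = (\<Sum>i<n. if i = 0 then 1 else 0)" by (intro sum.cong) (auto simp: e_def)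
  also have "\<dots> = 1" using n1 by (simp add: sum.delta)
  finally have "e \<in> S" unfolding S_def N_def using n1 by (auto simp: e_def)
  hence neS: "S \<noteq> {}" by auto
  obtain u where uS: "u \<in> S" and umin: "\<And>y. y \<in> S \<Longrightarrow> q u \<le> q y"
    using continuous_attains_inf[OF cS neS cq] by blast
  define \<mu> where "\<mu> = q u"
  have Nu: "N u = 1" using uS unfolding S_def by auto
  have A: "q x \<ge> \<mu> * N x" for x
  proof (cases "N x = 0")
    case True
    hence "\<forall>i\<in>{..<n}. x i ^ 2 = 0" unfolding N_def by (subst sum_nonneg_eq_0_iff[symmetric]) auto
    hence "q x = 0" unfolding q_def by auto
    thus ?thesis using True by simp
  next
    case False
    have Np: "N x > 0" using False unfolding N_def by (metis sum_nonneg zero_le_power2 order_le_less)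
    define r where "r = sqrt (N x)"
    have rp: "r > 0" using Np unfolding r_def by simp
    have r2: "r^2 = N x" unfolding r_def using Np by simp
    define y where "y i = (if i < n then x i / r else 0)" for i
    have xi: "x i^2 \<le> r^2" if "i < n" for i
      unfolding r2 N_def using that by (intro member_le_sum) auto
    have "\<bar>x i\<bar> \<le> r" if "i < n" for i using xi[OF that] rp
      by (metis abs_le_square_iff abs_of_pos)
    have yb: "y i \<in> {-1..1}" if "i < n" for i
    proof -
      have "\<bar>x i\<bar> \<le> r" using that \<open>\<And>i. i < n \<Longrightarrow> \<bar>x i\<bar> \<le> r\<close> by blast
      hence h: "-r \<le> x i" "x i \<le> r" by linarith+
      have "x i / r \<le> 1" using h rp by (simp add: pos_divide_le_eq)
      moreover have "-1 \<le> x i / r" using h rp by (simp add: pos_le_divide_eq)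
      ultimately show ?thesis unfolding y_def using that by simp
    qed
    have "N y = (\<Sum>i<n. x i^2) / r^2" unfolding N_def y_def
      by (simp add: power_divide sum_divide_distrib)
    also have "\<dots> = 1" using r2 Np unfolding N_def by simp
    finally have "y \<in> S" unfolding S_def using yb by (auto simp: y_def)
    hence "\<mu> \<le> q y" unfolding \<mu>_def by (rule umin)
    also have "q y = q x / r^2" unfolding q_def y_def
      by (simp add: sum_divide_distrib power2_eq_square)
    finally have "\<mu> * r^2 \<le> q x" using rp by (simp add: field_simps)
    thus ?thesis using r2 by simp
  qed
  define K where "K i j = M i j - (if i = j then \<mu> else 0)" for i j
  have qK: "(\<Sum>i<n. \<Sum>j<n. x i * K i j * x j) = q x - \<mu> * N x" for x
  proof -
    have "(\<Sum>j<n. x i * K i j * x j) = (\<Sum>j<n. x i * M i j * x j) - \<mu> * x i^2" if "i < n" for i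
    proof -
      have "(\<Sum>j<n. x i * K i j * x j) = (\<Sum>j<n. x i * M i j * x j - (if j = i then \<mu> * x i^2 else 0))"
        by (intro sum.cong) (auto simp: K_def algebra_simps power2_eq_square)
      also have "\<dots> = (\<Sum>j<n. x i * M i j * x j) - \<mu> * x i^2"
        using that by (simp add: sum_subtractf sum.delta)
      finally show ?thesis .
    qed
    hence "(\<Sum>i<n. \<Sum>j<n. x i * K i j * x j) = (\<Sum>i<n. (\<Sum>j<n. x i * M i j * x j) - \<mu> * x i^2)"
      by (intro sum.cong) auto
    thus ?thesis unfolding q_def N_def by (simp add: sum_subtractf sum_distrib_left)
  qed
  have Ku: "\<And>i. i < n \<Longrightarrow> (\<Sum>j<n. K i j * u j) = 0"
  proof (rule psd_kernel)
    show "K i j = K j i" if "i<n" "j<n" for i j using that sym unfolding K_def by auto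
    show "0 \<le> (\<Sum>i<n. \<Sum>j<n. x i * K i j * x j)" for x unfolding qK using A[of x] by simp
    show "(\<Sum>i<n. \<Sum>j<n. u i * K i j * u j) = 0" unfolding qK \<mu>_def Nu by simp
  qed
  have ev: "(\<Sum>j<n. M i j * u j) = \<mu> * u i" if "i < n" for i
  proof -
    have "(\<Sum>j<n. K i j * u j) = (\<Sum>j<n. M i j * u j) - \<mu> * u i"
    proof -
      have "(\<Sum>j<n. K i j * u j) = (\<Sum>j<n. M i j * u j - (if j = i then \<mu> * u i else 0))"
        by (intro sum.cong) (auto simp: K_def algebra_simps)
      thus ?thesis using that by (simp add: sum_subtractf sum.delta)
    qed
    thus ?thesis using Ku[OF that] by simp
  qed
  show ?thesis
    by (rule exI[of _ \<mu>], rule exI[of _ u]) (use Nu ev A in \<open>auto simp: N_def q_def\<close>)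
qed

lemma qf_eq:
  fixes M :: "real mat"
  assumes M: "M \<in> carrier_mat n n" and v: "v \<in> carrier_vec n"
  shows "v \<bullet> (M *\<^sub>v v) = (\<Sum>i<n. \<Sum>j<n. v$i * M$$(i,j) * v$j)"
  using M v by (simp add: scalar_prod_def sum_distrib_left atLeast0LessThan algebra_simps)

lemma sq_eq:
  fixes v :: "real Matrix.vec"
  assumes v: "v \<in> carrier_vec n"
  shows "v \<bullet> v = (\<Sum>i<n. (v$i)^2)"
  using v by (simp add: scalar_prod_def atLeast0LessThan power2_eq_square)

lemma sq_pos:
  fixes v :: "real Matrix.vec"
  assumes v: "v \<in> carrier_vec n" and nz: "v \<noteq> 0\<^sub>v n"
  shows "v \<bullet> v > 0"
proof -
  obtain i where i: "i < n" "v$i \<noteq> 0" using nz v by (metis eq_vecI carrier_vecD index_zero_vec)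
  have "0 < (v$i)^2" using i by simp
  also have "\<dots> \<le> (\<Sum>i<n. (v$i)^2)" using i by (intro member_le_sum) auto
  finally show ?thesis using sq_eq[OF v] by simp
qed

lemma finite_eigenvalues:
  fixes M :: "real mat"
  assumes M: "M \<in> carrier_mat n n"
  shows "finite {k. eigenvalue M k}"
proof -
  have "char_poly M \<noteq> 0" using degree_monic_char_poly[OF M] by auto
  hence "finite {k. poly (char_poly M) k = 0}" by (rule poly_roots_finite)
  thus ?thesis using eigenvalue_root_char_poly[OF M] by simp
qed

lemma rayleigh_mat:
  fixes M :: "real mat"
  assumes M: "M \<in> carrier_mat n n" and sym: "transpose_mat M = M" and n1: "n \<ge> 1"
  shows "finite {k. eigenvalue M k}" "eigenvalue M (min_eigenvalue M)"
    "\<And>x. x \<in> carrier_vec n \<Longrightarrow> min_eigenvalue M * (x \<bullet> x) \<le> x \<bullet> (M *\<^sub>v x)"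
proof -
  have symf: "M$$(i,j) = M$$(j,i)" if "i<n" "j<n" for i j
    using that M arg_cong[OF sym, of "\<lambda>A. A$$(i,j)"] by auto
  obtain \<mu> u where Nu: "(\<Sum>i<n. u i^2) = 1" and ev: "\<forall>i<n. (\<Sum>j<n. M$$(i,j) * u j) = \<mu> * u i"
     and A: "\<forall>x. (\<Sum>i<n. \<Sum>j<n. x i * M$$(i,j) * x j) \<ge> \<mu> * (\<Sum>i<n. x i^2)"
    using rayleigh_fun[of n "\<lambda>i j. M$$(i,j)", OF symf n1] by blast
  define v where "v = Matrix.vec n u"
  have v: "v \<in> carrier_vec n" unfolding v_def by simp
  have "v \<noteq> 0\<^sub>v n"
  proof
    assume "v = 0\<^sub>v n"
    hence "\<forall>i<n. u i = 0" unfolding v_def by (metis index_vec index_zero_vec(1))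
    hence "(\<Sum>i<n. u i^2) = 0" by simp
    thus False using Nu by simp
  qed
  moreover have "M *\<^sub>v v = \<mu> \<cdot>\<^sub>v v"
    by (rule eq_vecI) (use M ev in \<open>auto simp: v_def scalar_prod_def atLeast0LessThan\<close>)
  ultimately have evm: "eigenvalue M \<mu>" unfolding eigenvalue_def eigenvector_def using v M by auto
  have Ax: "\<mu> * (x \<bullet> x) \<le> x \<bullet> (M *\<^sub>v x)" if x: "x \<in> carrier_vec n" for x
    unfolding qf_eq[OF M x] sq_eq[OF x] using A by blast
  have ge: "\<mu> \<le> k" if ek: "eigenvalue M k" for k
  proof -
    obtain w where w: "w \<in> carrier_vec n" "w \<noteq> 0\<^sub>v n" "M *\<^sub>v w = k \<cdot>\<^sub>v w"
      using ek M unfolding eigenvalue_def eigenvector_def by auto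
    have "\<mu> * (w \<bullet> w) \<le> w \<bullet> (M *\<^sub>v w)" by (rule Ax[OF w(1)])
    also have "\<dots> = k * (w \<bullet> w)" unfolding w(3) using w(1) by simp
    finally show ?thesis using sq_pos[OF w(1,2)] by simp
  qed
  show fin: "finite {k. eigenvalue M k}" by (rule finite_eigenvalues[OF M])
  have mu: "min_eigenvalue M = \<mu>" unfolding min_eigenvalue_def
    by (rule Min_eqI[OF fin]) (use ge evm in auto)
  show "eigenvalue M (min_eigenvalue M)" using mu evm by simp
  show "\<And>x. x \<in> carrier_vec n \<Longrightarrow> min_eigenvalue M * (x \<bullet> x) \<le> x \<bullet> (M *\<^sub>v x)"
    using Ax mu by simp
qed

lemma divsum_coprime:
  fixes a b :: nat and f :: "nat \<Rightarrow> real"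
  assumes cop: "coprime a b" and a: "a > 0" and b: "b > 0"
  shows "(\<Sum>d\<in>{d. d dvd a*b}. f d) = (\<Sum>x\<in>{x. x dvd a}. \<Sum>y\<in>{y. y dvd b}. f (x*y))"
proof -
  let ?g = "\<lambda>(x,y). x*(y::nat)"
  have fa: "finite {x. x dvd a}" using a by simp
  have fb: "finite {y. y dvd b}" using b by simp
  have inj: "inj_on ?g ({x. x dvd a} \<times> {y. y dvd b})"
  proof (rule inj_onI, clarsimp)
    fix x y x' y' assume xa: "x dvd a" and yb: "y dvd b" and xa': "x' dvd a" and yb': "y' dvd b"
      and eq: "x*y = x'*y'"
    have c1: "coprime x y'" using cop xa yb' by (meson coprime_divisors)
    have c2: "coprime x' y" using cop xa' yb by (meson coprime_divisors)
    have "x dvd x'*y'" using eq by (metis dvd_triv_left)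
    hence "x dvd x'" using c1 by (simp add: coprime_dvd_mult_left_iff)
    moreover have "x' dvd x*y" using eq by (metis dvd_triv_left)
    hence "x' dvd x" using c2 by (simp add: coprime_dvd_mult_left_iff)
    ultimately have "x = x'" by (rule dvd_antisym)
    moreover have "x > 0" using xa a by (metis dvd_0_left_iff gr0I)
    ultimately show "x = x' \<and> y = y'" using eq by simp
  qed
  have img: "?g ` ({x. x dvd a} \<times> {y. y dvd b}) = {d. d dvd a*b}"
  proof
    show "?g ` ({x. x dvd a} \<times> {y. y dvd b}) \<subseteq> {d. d dvd a*b}" by (auto intro: mult_dvd_mono)
    show "{d. d dvd a*b} \<subseteq> ?g ` ({x. x dvd a} \<times> {y. y dvd b})"
    proof
      fix d assume "d \<in> {d. d dvd a*b}"
      then obtain x y where "d = x*y" "x dvd a" "y dvd b" by (auto elim: dvd_productE)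
      thus "d \<in> ?g ` ({x. x dvd a} \<times> {y. y dvd b})" by force
    qed
  qed
  have "(\<Sum>x\<in>{x. x dvd a}. \<Sum>y\<in>{y. y dvd b}. f (x*y)) = (\<Sum>p\<in>{x. x dvd a} \<times> {y. y dvd b}. f (?g p))"
    by (simp add: sum.cartesian_product case_prod_beta)
  also have "\<dots> = sum f (?g ` ({x. x dvd a} \<times> {y. y dvd b}))"
    by (rule sum.reindex[OF inj, symmetric, unfolded comp_def])
  finally show ?thesis using img by simp
qed

lemma J_one: "Jordan_tot s 1 = 1" "Jordan_tot s (Suc 0) = 1"
  by (simp_all add: Jordan_tot_def)

lemma J_mult:
  fixes x y :: nat
  assumes cop: "coprime x y" and x: "x > 0" and y: "y > 0"
  shows "Jordan_tot s (x*y) = Jordan_tot s x * Jordan_tot s y"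
proof -
  have pf: "prime_factors (x*y) = prime_factors x \<union> prime_factors y"
    using x y by (simp add: prime_factors_product)
  have disj: "prime_factors x \<inter> prime_factors y = {}"
  proof (rule ccontr)
    assume "prime_factors x \<inter> prime_factors y \<noteq> {}"
    then obtain q where "q \<in> prime_factors x" "q \<in> prime_factors y" by blast
    hence "prime q" "q dvd x" "q dvd y" by (auto simp: in_prime_factors_iff)
    thus False using cop by (metis coprime_common_divisor not_prime_unit)
  qed
  have "real (x*y) powr s = real x powr s * real y powr s" by (simp add: powr_mult)
  moreover have "(\<Prod>p\<in>prime_factors (x*y). (1 - real p powr (-s))) =
     (\<Prod>p\<in>prime_factors x. (1 - real p powr (-s))) * (\<Prod>p\<in>prime_factors y. (1 - real p powr (-s)))"
    unfolding pf by (rule prod.union_disjoint) (use disj in auto)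
  ultimately show ?thesis unfolding Jordan_tot_def by (simp add: algebra_simps)
qed

lemma J_primepow_step:
  assumes p: "prime (p::nat)"
  shows "Jordan_tot s (p^Suc e) = real (p^Suc e) powr s - real (p^e) powr s"
proof -
  have pf: "prime_factors (p^Suc e) = {p}" by (subst prime_factorization_prime_power[OF p]) simp
  have pp: "real p > 0" using p prime_gt_0_nat by simp
  have "real (p^Suc e) powr s = real p powr s * real (p^e) powr s"
    by (simp add: powr_mult)
  moreover have "real p powr s * real p powr (-s) = 1" using pp by (simp add: powr_add[symmetric])
  ultimately show ?thesis unfolding Jordan_tot_def pf
    by (simp add: algebra_simps)
qed

lemma J_primepow_sum:
  assumes p: "prime (p::nat)"
  shows "(\<Sum>k\<le>e. Jordan_tot s (p^k)) = real (p^e) powr s"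
proof (induction e)
  case 0 thus ?case by (simp add: J_one)
next
  case (Suc e) thus ?case using J_primepow_step[OF p, of s e] by simp
qed

lemma J_divsum:
  fixes m :: nat
  assumes "m > 0"
  shows "(\<Sum>d\<in>{d. d dvd m}. Jordan_tot s d) = real m powr s"
  using assms
proof (induction m rule: less_induct)
  case (less m)
  show ?case
  proof (cases "m = 1")
    case True thus ?thesis by (simp add: J_one)
  next
    case False
    hence "m > 1" using less.prems by simp
    then obtain p where p: "prime p" "p dvd m" using prime_factor_nat[of m] by auto
    define e where "e = multiplicity p m"
    obtain b where mb: "m = p^e * b" and npb: "\<not> p dvd b"
      using multiplicity_decompose'[of m p] less.prems p(1) not_prime_unit unfolding e_def by blast
    have b0: "b > 0" using mb less.prems by (metis gr0I mult_0_right)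
    have e1: "e \<ge> 1" unfolding e_def using p less.prems
      by (simp add: Suc_le_eq prime_multiplicity_gt_zero_iff prime_elem_nat_iff)
    have p1: "p > 1" using p prime_gt_1_nat by blast
    have "p^e > 1" using p1 e1 by (intro one_less_power) auto
    hence bm: "b < m" using mb b0 by simp
    have copb: "coprime (p^e) b" using npb p by (simp add: prime_imp_coprime)
    have pe0: "p^e > 0" using p1 by simp
    have "(\<Sum>d\<in>{d. d dvd m}. Jordan_tot s d) = (\<Sum>x\<in>{x. x dvd p^e}. \<Sum>y\<in>{y. y dvd b}. Jordan_tot s (x*y))"
      unfolding mb by (rule divsum_coprime[OF copb pe0 b0])
    also have "\<dots> = (\<Sum>x\<in>{x. x dvd p^e}. \<Sum>y\<in>{y. y dvd b}. Jordan_tot s x * Jordan_tot s y)"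
    proof (intro sum.cong refl)
      fix x y assume "x \<in> {x. x dvd p^e}" "y \<in> {y. y dvd b}"
      hence "x dvd p^e" "y dvd b" by auto
      moreover hence "coprime x y" using copb by (meson coprime_divisors)
      moreover have "x > 0" using \<open>x dvd p^e\<close> pe0 by (metis dvd_0_left_iff gr0I)
      moreover have "y > 0" using \<open>y dvd b\<close> b0 by (metis dvd_0_left_iff gr0I)
      ultimately show "Jordan_tot s (x*y) = Jordan_tot s x * Jordan_tot s y" by (simp add: J_mult)
    qed
    also have "\<dots> = (\<Sum>x\<in>{x. x dvd p^e}. Jordan_tot s x) * (\<Sum>y\<in>{y. y dvd b}. Jordan_tot s y)"
      by (simp add: sum_product)
    also have "(\<Sum>y\<in>{y. y dvd b}. Jordan_tot s y) = real b powr s" using less.IH[OF bm b0] .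
    also have "{x. x dvd p^e} = (\<lambda>k. p^k) ` {..e}"
      using divides_primepow_nat[OF p(1)] by auto
    also have "(\<Sum>x\<in>(\<lambda>k. p^k) ` {..e}. Jordan_tot s x) = (\<Sum>k\<le>e. Jordan_tot s (p^k))"
      by (rule sum.reindex_cong[where l="\<lambda>k. p^k"]) (use p1 in \<open>auto simp: inj_on_def power_inject_exp\<close>)
    also have "\<dots> = real (p^e) powr s" by (rule J_primepow_sum[OF p(1)])
    finally show ?thesis unfolding mb by (simp add: powr_mult)
  qed
qed

lemma gram_eq:
  fixes B :: "real mat"
  assumes B: "B \<in> carrier_mat n n" and u: "u \<in> carrier_vec n"
  shows "u \<bullet> ((transpose_mat B * B) *\<^sub>v u) = (B *\<^sub>v u) \<bullet> (B *\<^sub>v u)"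
proof -
  have "(transpose_mat B * B) *\<^sub>v u = transpose_mat B *\<^sub>v (B *\<^sub>v u)" using B u by simp
  hence "u \<bullet> ((transpose_mat B * B) *\<^sub>v u) = (transpose_mat B *\<^sub>v (B *\<^sub>v u)) \<bullet> u"
    using B u by (simp add: comm_scalar_prod[of u n])
  also have "\<dots> = (B *\<^sub>v u) \<bullet> (B *\<^sub>v u)"
    by (rule transpose_vec_mult_scalar[OF B u]) (use B u in auto)
  finally show ?thesis .
qed

lemma inj_det:
  fixes B :: "real mat"
  assumes B: "B \<in> carrier_mat n n" and d: "Determinant.det B \<noteq> 0" and u: "u \<in> carrier_vec n" and nz: "u \<noteq> 0\<^sub>v n"
  shows "B *\<^sub>v u \<noteq> 0\<^sub>v n"
  using det_0_iff_vec_prod_zero[OF B] d u nz by blast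

lemma gram_bound:
  fixes B :: "real mat"
  assumes B: "B \<in> carrier_mat n n" and d: "Determinant.det B \<noteq> 0" and n1: "n \<ge> 1"
  shows "min_eigenvalue (transpose_mat B * B) > 0"
    "\<And>y. y \<in> carrier_vec n \<Longrightarrow> min_eigenvalue (transpose_mat B * B) * (y \<bullet> y) \<le> (transpose_mat B *\<^sub>v y) \<bullet> (transpose_mat B *\<^sub>v y)"
proof -
  let ?G = "transpose_mat B * B"
  let ?C = "transpose_mat B"
  let ?H = "transpose_mat ?C * ?C"
  have C: "?C \<in> carrier_mat n n" using B by simp
  have dC: "Determinant.det ?C \<noteq> 0" using d Determinant.det_transpose[OF B] by simp
  have G: "?G \<in> carrier_mat n n" using B by simp
  have H: "?H \<in> carrier_mat n n" using B by simp
  have symG: "transpose_mat ?G = ?G" using B by (simp add: transpose_mult[of _ n n _ n])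
  have symH: "transpose_mat ?H = ?H" using C by (simp add: transpose_mult[of _ n n _ n])
  note RG = rayleigh_mat[OF G symG n1]
  note RH = rayleigh_mat[OF H symH n1]
  obtain u where u: "u \<in> carrier_vec n" "u \<noteq> 0\<^sub>v n" "?G *\<^sub>v u = min_eigenvalue ?G \<cdot>\<^sub>v u"
    using RG(2) G unfolding eigenvalue_def eigenvector_def by auto
  have "min_eigenvalue ?G * (u \<bullet> u) = u \<bullet> (?G *\<^sub>v u)" unfolding u(3) using u by simp
  also have "\<dots> = (B *\<^sub>v u) \<bullet> (B *\<^sub>v u)" by (rule gram_eq[OF B u(1)])
  also have "\<dots> > 0" using sq_pos[of "B *\<^sub>v u" n] inj_det[OF B d u(1,2)] B u(1) by auto
  finally show pos: "min_eigenvalue ?G > 0" using sq_pos[OF u(1,2)] by (simp add: zero_less_mult_iff)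
  obtain w where w: "w \<in> carrier_vec n" "w \<noteq> 0\<^sub>v n" "?H *\<^sub>v w = min_eigenvalue ?H \<cdot>\<^sub>v w"
    using RH(2) H unfolding eigenvalue_def eigenvector_def by auto
  have "?G *\<^sub>v (?C *\<^sub>v w) = ?C *\<^sub>v (?H *\<^sub>v w)"
    using B w by (simp add: assoc_mult_mat[of _ n n _ n _ n, symmetric])
  also have "\<dots> = min_eigenvalue ?H \<cdot>\<^sub>v (?C *\<^sub>v w)" unfolding w(3) using C w by (simp add: mult_mat_vec)
  finally have "eigenvalue ?G (min_eigenvalue ?H)"
    unfolding eigenvalue_def eigenvector_def using inj_det[OF C dC w(1,2)] C G w(1) by (intro exI[of _ "?C *\<^sub>v w"]) auto
  hence le: "min_eigenvalue ?G \<le> min_eigenvalue ?H" unfolding min_eigenvalue_def[of ?G]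
    using RG(1) by (intro Min_le) auto
  fix y :: "real Matrix.vec" assume y: "y \<in> carrier_vec n"
  have "min_eigenvalue ?G * (y \<bullet> y) \<le> min_eigenvalue ?H * (y \<bullet> y)"
    using le sq_eq[OF y] by (intro mult_right_mono) (auto intro: sum_nonneg)
  also have "\<dots> \<le> y \<bullet> (?H *\<^sub>v y)" by (rule RH(3)[OF y])
  also have "\<dots> = (?C *\<^sub>v y) \<bullet> (?C *\<^sub>v y)" by (rule gram_eq[OF C y])
  finally show "min_eigenvalue ?G * (y \<bullet> y) \<le> (?C *\<^sub>v y) \<bullet> (?C *\<^sub>v y)" .
qed

lemma E_det: "Determinant.det (E_mat n) = 1"
proof -
  have E: "E_mat n \<in> carrier_mat n n" unfolding E_mat_def by simp
  have "Determinant.det (E_mat n) = prod_list (diag_mat (E_mat n))"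
  proof (rule det_lower_triangular[OF _ E])
    fix i j assume "i < j" "j < n"
    hence "\<not> (j+1) dvd (i+1)" using dvd_imp_le[of "j+1" "i+1"] by auto
    thus "E_mat n $$ (i,j) = 0" using \<open>i<j\<close> \<open>j<n\<close> unfolding E_mat_def by simp
  qed
  also have "diag_mat (E_mat n) = map (\<lambda>_. 1) [0..<n]"
    unfolding diag_mat_def E_mat_def by simp
  also have "prod_list (map (\<lambda>_. 1::real) [0..<n]) = 1" by (induction n) auto
  finally show ?thesis .
qed

lemma J_pos:
  assumes s: "s > 0" and d: "d > 0"
  shows "Jordan_tot s d > 0"
proof -
  have "(\<Prod>p\<in>prime_factors d. (1 - real p powr (-s))) > 0"
  proof (rule prod_pos)
    fix p assume "p \<in> prime_factors d"
    hence "p > 1" by (metis in_prime_factors_iff prime_gt_1_nat)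
    hence "real p powr (-s) < 1" using s by (intro powr_less_one) auto
    thus "0 < 1 - real p powr (-s)" by simp
  qed
  moreover have "real d powr s > 0" using d by simp
  ultimately show ?thesis unfolding Jordan_tot_def by simp
qed

lemma A_entry:
  assumes i: "i < n" and j: "j < n"
  shows "A_mat n \<alpha> \<beta> $$ (i,j) = real (i+1) powr \<beta> * real (j+1) powr \<beta> *
     (\<Sum>d\<in>{1..n}. if d dvd (i+1) \<and> d dvd (j+1) then Jordan_tot (\<alpha>-\<beta>) d else 0)"
proof -
  define g where "g = gcd (i+1) (j+1)"
  define l where "l = lcm (i+1) (j+1)"
  have g0: "g > 0" unfolding g_def by simp
  have l0: "l > 0" unfolding l_def by (simp add: lcm_pos_nat)
  have gl: "real g * real l = real (i+1) * real (j+1)"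
    unfolding g_def l_def by (metis of_nat_mult prod_gcd_lcm_nat)
  have "real g powr \<beta> * real l powr \<beta> = real (i+1) powr \<beta> * real (j+1) powr \<beta>"
    using gl by (simp add: powr_mult[symmetric])
  hence lb: "real l powr \<beta> = real (i+1) powr \<beta> * real (j+1) powr \<beta> / real g powr \<beta>"
    using g0 by (simp add: field_simps)
  have "real g powr \<alpha> * real l powr \<beta> = real (i+1) powr \<beta> * real (j+1) powr \<beta> * (real g powr \<alpha> / real g powr \<beta>)"
    unfolding lb by simp
  also have "real g powr \<alpha> / real g powr \<beta> = real g powr (\<alpha> - \<beta>)" by (simp add: powr_diff)
  also have "\<dots> = (\<Sum>d\<in>{d. d dvd g}. Jordan_tot (\<alpha>-\<beta>) d)" using J_divsum[OF g0] by simp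
  also have "{d. d dvd g} = {d\<in>{1..n}. d dvd (i+1) \<and> d dvd (j+1)}"
  proof safe
    fix d assume "d dvd g"
    hence "d dvd (i+1)" "d dvd (j+1)" unfolding g_def by auto
    moreover hence "d \<le> i+1" by (intro dvd_imp_le) auto
    moreover have "d > 0" using \<open>d dvd (i+1)\<close> by (metis dvd_0_left_iff gr0I add_eq_0_iff_both_eq_0 one_neq_zero)
    ultimately show "d \<in> {1..n}" using i by auto
    show "d dvd (i+1)" "d dvd (j+1)" by fact+
  next
    fix d assume "d dvd (i+1)" "d dvd (j+1)"
    thus "d dvd g" unfolding g_def by simp
  qed
  also have "(\<Sum>d\<in>{d\<in>{1..n}. d dvd (i+1) \<and> d dvd (j+1)}. Jordan_tot (\<alpha>-\<beta>) d) =
      (\<Sum>d\<in>{1..n}. if d dvd (i+1) \<and> d dvd (j+1) then Jordan_tot (\<alpha>-\<beta>) d else 0)"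
    by (rule sum.inter_filter) simp
  finally show ?thesis using i j unfolding A_mat_def g_def l_def by simp
qed

lemma A_quad:
  fixes x :: "real Matrix.vec"
  assumes x: "x \<in> carrier_vec n"
  shows "x \<bullet> (A_mat n \<alpha> \<beta> *\<^sub>v x) = (\<Sum>d\<in>{1..n}. Jordan_tot (\<alpha>-\<beta>) d *
      (\<Sum>i<n. if d dvd (i+1) then real (i+1) powr \<beta> * x$i else 0)^2)"
proof -
  define c where "c d i = (if d dvd (i+1) then real (i+1) powr \<beta> * x$i else 0)" for d i
  define J where "J d = Jordan_tot (\<alpha>-\<beta>) d" for d
  have A: "A_mat n \<alpha> \<beta> \<in> carrier_mat n n" unfolding A_mat_def by simp
  have "x \<bullet> (A_mat n \<alpha> \<beta> *\<^sub>v x) = (\<Sum>i<n. \<Sum>j<n. x$i * A_mat n \<alpha> \<beta> $$ (i,j) * x$j)"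
    by (rule qf_eq[OF A x])
  also have "\<dots> = (\<Sum>i<n. \<Sum>j<n. \<Sum>d\<in>{1..n}. J d * (c d i * c d j))"
  proof (intro sum.cong refl)
    fix i j assume "i \<in> {..<n}" "j \<in> {..<n}"
    hence ij: "i < n" "j < n" by auto
    show "x$i * A_mat n \<alpha> \<beta> $$ (i,j) * x$j = (\<Sum>d\<in>{1..n}. J d * (c d i * c d j))"
      unfolding A_entry[OF ij] sum_distrib_left sum_distrib_right
      by (intro sum.cong refl) (auto simp: c_def J_def)
  qed
  also have "\<dots> = (\<Sum>i<n. \<Sum>d\<in>{1..n}. \<Sum>j<n. J d * (c d i * c d j))"
    by (intro sum.cong refl sum.swap)
  also have "\<dots> = (\<Sum>d\<in>{1..n}. \<Sum>i<n. \<Sum>j<n. J d * (c d i * c d j))"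
    by (rule sum.swap)
  also have "\<dots> = (\<Sum>d\<in>{1..n}. J d * (\<Sum>i<n. c d i)^2)"
  proof (intro sum.cong refl)
    fix d
    have "(\<Sum>i<n. c d i)^2 = (\<Sum>i<n. \<Sum>j<n. c d i * c d j)"
      by (simp only: power2_eq_square sum_product)
    thus "(\<Sum>i<n. \<Sum>j<n. J d * (c d i * c d j)) = J d * (\<Sum>i<n. c d i)^2"
      by (simp add: sum_distrib_left)
  qed
  finally show ?thesis unfolding c_def J_def .
qed

lemma ET_comp:
  assumes k: "k < n"
  shows "(transpose_mat (E_mat n) *\<^sub>v Matrix.vec n y) $ k = (\<Sum>i<n. if (k+1) dvd (i+1) then y i else 0)"
  using k unfolding E_mat_def
  by (auto simp: scalar_prod_def atLeast0LessThan intro!: sum.cong)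

theorem theorem3p1:
  fixes n :: nat and \<alpha> \<beta> :: real
  assumes "n \<ge> 1" and "\<alpha> > \<beta>"
  shows "symmetric_mat (A_mat n \<alpha> \<beta>) \<and> pos_def_mat (A_mat n \<alpha> \<beta>) \<and>
         min_eigenvalue (A_mat n \<alpha> \<beta>)
           \<ge> t_min n * (MIN i\<in>{1..n}. Jordan_tot (\<alpha> - \<beta>) i) * min 1 (real n powr (2 * \<beta>)) \<and>
         t_min n * (MIN i\<in>{1..n}. Jordan_tot (\<alpha> - \<beta>) i) * min 1 (real n powr (2 * \<beta>)) > 0"
proof -
  note n1 = assms(1)
  have s: "\<alpha> - \<beta> > 0" using assms(2) by simp
  let ?A = "A_mat n \<alpha> \<beta>"
  define t where "t = t_min n"
  define mJ where "mJ = (MIN i\<in>{1..n}. Jordan_tot (\<alpha> - \<beta>) i)"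
  define m where "m = min 1 (real n powr (2 * \<beta>))"
  define c where "c = t * mJ * m"
  have A: "?A \<in> carrier_mat n n" unfolding A_mat_def by simp
  have symA: "transpose_mat ?A = ?A"
    by (rule eq_matI) (auto simp: A_mat_def gcd.commute lcm.commute)
  have sym: "symmetric_mat ?A" unfolding symmetric_mat_def using A symA by simp
  have E: "E_mat n \<in> carrier_mat n n" unfolding E_mat_def by simp
  have dE: "Determinant.det (E_mat n) \<noteq> 0" using E_det by simp
  note GB = gram_bound[OF E dE n1]
  have tpos: "t > 0" unfolding t_def t_min_def by (rule GB(1))
  have ne: "{1..n} \<noteq> {}" using n1 by auto
  have mJpos: "mJ > 0" unfolding mJ_def using ne J_pos[OF s] by (subst Min_gr_iff) auto
  have mJle: "mJ \<le> Jordan_tot (\<alpha> - \<beta>) d" if "d \<in> {1..n}" for d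
    unfolding mJ_def using that by (intro Min_le) auto
  have mpos: "m > 0" unfolding m_def using n1 by simp
  have wm: "m \<le> (real (i+1) powr \<beta>)^2" if "i < n" for i
  proof -
    have eq: "(real (i+1) powr \<beta>)^2 = real (i+1) powr (2*\<beta>)"
      by (simp add: power2_eq_square powr_add[symmetric])
    show ?thesis
    proof (cases "\<beta> \<ge> 0")
      case True
      hence "1 \<le> real (i+1) powr (2*\<beta>)" by (intro ge_one_powr_ge_zero) auto
      thus ?thesis unfolding eq m_def by simp
    next
      case False
      hence "real n powr (2*\<beta>) \<le> real (i+1) powr (2*\<beta>)"
        using that by (intro powr_mono2') auto
      thus ?thesis unfolding eq m_def by simp
    qed
  qed
  have key: "c * (x \<bullet> x) \<le> x \<bullet> (?A *\<^sub>v x)" if x: "x \<in> carrier_vec n" for x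
  proof -
    define y where "y i = real (i+1) powr \<beta> * x$i" for i
    define S where "S d = (\<Sum>i<n. if d dvd (i+1) then y i else 0)" for d
    define yv where "yv = Matrix.vec n y"
    have yv: "yv \<in> carrier_vec n" unfolding yv_def by simp
    have "x \<bullet> (?A *\<^sub>v x) = (\<Sum>d\<in>{1..n}. Jordan_tot (\<alpha>-\<beta>) d * (S d)^2)"
      unfolding A_quad[OF x] S_def y_def ..
    also have "\<dots> \<ge> (\<Sum>d\<in>{1..n}. mJ * (S d)^2)"
      by (intro sum_mono mult_right_mono mJle) auto
    finally have i1: "mJ * (\<Sum>d\<in>{1..n}. (S d)^2) \<le> x \<bullet> (?A *\<^sub>v x)"
      by (simp add: sum_distrib_left)
    have "(\<Sum>d\<in>{1..n}. (S d)^2) = (\<Sum>k<n. (S (Suc k))^2)"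
      by (induction n) auto
    also have "\<dots> = (transpose_mat (E_mat n) *\<^sub>v yv) \<bullet> (transpose_mat (E_mat n) *\<^sub>v yv)"
    proof -
      have "(transpose_mat (E_mat n) *\<^sub>v yv) \<bullet> (transpose_mat (E_mat n) *\<^sub>v yv)
          = (\<Sum>k<n. ((transpose_mat (E_mat n) *\<^sub>v yv) $ k)^2)"
        by (rule sq_eq) (use E in \<open>simp add: yv_def\<close>)
      also have "\<dots> = (\<Sum>k<n. (S (Suc k))^2)"
      proof (intro sum.cong refl)
        fix k assume "k \<in> {..<n}"
        thus "((transpose_mat (E_mat n) *\<^sub>v yv) $ k)^2 = (S (Suc k))^2"
          unfolding yv_def using ET_comp[of k n y] by (simp add: S_def)
      qed
      finally show ?thesis by simp
    qed
    finally have i2: "(\<Sum>d\<in>{1..n}. (S d)^2) \<ge> t * (yv \<bullet> yv)"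
      using GB(2)[OF yv] unfolding t_def t_min_def by simp
    have "yv \<bullet> yv = (\<Sum>i<n. (y i)^2)" unfolding sq_eq[OF yv] by (simp add: yv_def)
    also have "\<dots> \<ge> (\<Sum>i<n. m * (x$i)^2)"
      unfolding y_def power_mult_distrib using wm by (intro sum_mono mult_right_mono) auto
    finally have i3: "yv \<bullet> yv \<ge> m * (x \<bullet> x)" unfolding sq_eq[OF x] by (simp add: sum_distrib_left)
    have "c * (x \<bullet> x) = mJ * (t * (m * (x \<bullet> x)))" unfolding c_def by simp
    also have "\<dots> \<le> mJ * (t * (yv \<bullet> yv))"
      using i3 tpos mJpos by (intro mult_left_mono) auto
    also have "\<dots> \<le> mJ * (\<Sum>d\<in>{1..n}. (S d)^2)"
      using i2 mJpos by (intro mult_left_mono) auto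
    also have "\<dots> \<le> x \<bullet> (?A *\<^sub>v x)" by (rule i1)
    finally show ?thesis .
  qed
  have cpos: "c > 0" unfolding c_def using tpos mJpos mpos by simp
  have pd: "pos_def_mat ?A"
    unfolding pos_def_mat_def
  proof (intro conjI sym ballI impI)
    fix x :: "real Matrix.vec" assume "x \<in> carrier_vec (dim_row ?A)" "x \<noteq> 0\<^sub>v (dim_row ?A)"
    hence x: "x \<in> carrier_vec n" "x \<noteq> 0\<^sub>v n" using A by auto
    have "0 < c * (x \<bullet> x)" using cpos sq_pos[OF x] by simp
    also have "\<dots> \<le> x \<bullet> (?A *\<^sub>v x)" by (rule key[OF x(1)])
    finally show "x \<bullet> (?A *\<^sub>v x) > 0" .
  qed
  note RA = rayleigh_mat[OF A symA n1]
  obtain v where v: "v \<in> carrier_vec n" "v \<noteq> 0\<^sub>v n" "?A *\<^sub>v v = min_eigenvalue ?A \<cdot>\<^sub>v v"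
    using RA(2) A unfolding eigenvalue_def eigenvector_def by auto
  have "c * (v \<bullet> v) \<le> v \<bullet> (?A *\<^sub>v v)" by (rule key[OF v(1)])
  also have "\<dots> = min_eigenvalue ?A * (v \<bullet> v)" unfolding v(3) using v by simp
  finally have "c \<le> min_eigenvalue ?A" using sq_pos[OF v(1,2)] by simp
  thus ?thesis using sym pd cpos unfolding c_def t_def mJ_def m_def by simp
qed

end
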